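(* Let $s=(x_0,x_1,\dots,x_d,y)$ be a sample with features $x=(x_0,\dots,x_d)\in\mathbb{R}^{d+1}$ and label $y\in\{0,1\}$, and let $\lambda=(\lambda_1,\dots,\lambda_d)\in[0,1)^d$ with RIM augmentation $s_\lambda=(x_{0,\lambda_0},\dots,x_{d,\lambda_d},y)$. Let $f_\theta$ be a neural network with ReLU activations and sigmoid output, $f_\theta(x)=\sigma(g_\theta(x))$, where the last-layer pre-activation is $g_\theta(x)=\nabla g_\theta^T x+b$ with $\nabla g_\theta\in\mathbb{R}^{d+1}$ the gradient of $g_\theta$ with respect to the input. Let $l$ be the binary cross-entropy loss $l(s,\theta)=-\big(y\log f_\theta(x)+(1-y)\log(1-f_\theta(x))\big)$. Then $$\|l(s_\lambda,\theta)-l(s,\theta)\|\le\sqrt{d}\Big(\|A\|_F+\sum_{i=1}^d\|B_i\|_F\Big)\|\nabla g_\theta\|,$$ where $\|\cdot\|_F$ is the Frobenius norm, $\|\nabla g_\theta\|$ the Euclidean norm, and $A,B_1,\dots,B_d$ are the $(d+1)\times(d+1)$ matrices whose first row and first column are zero and whose lower-right $d\times d$ blocks have entry in row $j$, column $r$ ($1\le j,r\le d$) equal to $\frac{\partial x_{r,\lambda_r}}{\partial\lambda_j}\big|_{\lambda=\vec 0}$ for $A$ and $\frac{\partial^2 x_{r,\lambda_r}}{\partial\lambda_i\partial\lambda_j}\big|_{\lambda=\vec 0}$ for $B_i$ (these entries vanish for $r<j$).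
   Context: RIM augmentation: $x_{0,\lambda_0}=x_0$ and $x_{j,\lambda_j}=(1-\lambda_j)x_j+\lambda_j x_{j-1,\lambda_{j-1}}$ for $j=1,\dots,d$; the augmented sample keeps the label $y$. The matrix $A$ is interpreted as the "velocity" and the $B_i$ as the "accelerations" of the augmented features with respect to the interpolation coefficients. $\sigma(t)=1/(1+e^{-t})$. *)

theory Defs
  imports "HOL-Analysis.Analysis"
begin

text \<open>Vectors in R^(d+1) are represented as functions nat => real, indices 0..d.\<close>

fun rim :: "(nat \<Rightarrow> real) \<Rightarrow> (nat \<Rightarrow> real) \<Rightarrow> nat \<Rightarrow> real" where
  "rim x lam 0 = x 0"
| "rim x lam (Suc j) = (1 - lam (Suc j)) * x (Suc j) + lam (Suc j) * rim x lam j"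

definition partial_at :: "((nat \<Rightarrow> real) \<Rightarrow> real) \<Rightarrow> nat \<Rightarrow> (nat \<Rightarrow> real) \<Rightarrow> real" where
  "partial_at F j p = deriv (\<lambda>t. F (p(j := t))) (p j)"

definition partial2_at :: "((nat \<Rightarrow> real) \<Rightarrow> real) \<Rightarrow> nat \<Rightarrow> nat \<Rightarrow> (nat \<Rightarrow> real) \<Rightarrow> real" where
  "partial2_at F i j p = partial_at (\<lambda>q. partial_at F j q) i p"

definition velA :: "(nat \<Rightarrow> real) \<Rightarrow> nat \<Rightarrow> nat \<Rightarrow> nat \<Rightarrow> real" where
  "velA x d j r = (if 1 \<le> j \<and> j \<le> d \<and> 1 \<le> r \<and> r \<le> d
      then partial_at (\<lambda>lam. rim x lam r) j (\<lambda>_. 0) else 0)"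

definition accB :: "(nat \<Rightarrow> real) \<Rightarrow> nat \<Rightarrow> nat \<Rightarrow> nat \<Rightarrow> nat \<Rightarrow> real" where
  "accB x d i j r = (if 1 \<le> j \<and> j \<le> d \<and> 1 \<le> r \<and> r \<le> d
      then partial2_at (\<lambda>lam. rim x lam r) i j (\<lambda>_. 0) else 0)"

definition frob :: "nat \<Rightarrow> (nat \<Rightarrow> nat \<Rightarrow> real) \<Rightarrow> real" where
  "frob d M = sqrt (\<Sum>j\<le>d. \<Sum>r\<le>d. (M j r)\<^sup>2)"

definition vnorm :: "nat \<Rightarrow> (nat \<Rightarrow> real) \<Rightarrow> real" where
  "vnorm d w = sqrt (\<Sum>k\<le>d. (w k)\<^sup>2)"

definition sigmoid :: "real \<Rightarrow> real" where
  "sigmoid t = 1 / (1 + exp (- t))"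

definition bce :: "real \<Rightarrow> real \<Rightarrow> real" where
  "bce y p = - (y * ln p + (1 - y) * ln (1 - p))"

end

theory Submission
  imports Defs
begin

fun Dr :: "(nat \<Rightarrow> real) \<Rightarrow> (nat \<Rightarrow> real) \<Rightarrow> nat \<Rightarrow> nat \<Rightarrow> real" where
  "Dr x q j 0 = 0"
| "Dr x q j (Suc r) = (if j = Suc r then rim x q r - x (Suc r) else q (Suc r) * Dr x q j r)"

lemma rim_indep: "r < j \<Longrightarrow> rim x (q(j:=t)) r = rim x q r"
  by (induction r) auto

lemma rim_zero: "rim x (\<lambda>_. 0) r = x r"
  by (induction r) auto

lemma rim_deriv: "((\<lambda>t. rim x (q(j:=t)) r) has_real_derivative Dr x q j r) (at t0)"
proof (induction r)
  case 0
  then show ?case by simp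
next
  case (Suc r)
  show ?case
  proof (cases "j = Suc r")
    case True
    have e: "(\<lambda>t. rim x (q(j:=t)) (Suc r)) = (\<lambda>t. (1 - t) * x (Suc r) + t * rim x q r)"
      using True by (auto simp: rim_indep)
    show ?thesis unfolding e using True
      by (auto intro!: derivative_eq_intros)
  next
    case False
    have e: "(\<lambda>t. rim x (q(j:=t)) (Suc r)) = (\<lambda>t. (1 - q (Suc r)) * x (Suc r) + q (Suc r) * rim x (q(j:=t)) r)"
      using False by auto
    show ?thesis unfolding e using False
      by (auto intro!: derivative_eq_intros Suc)
  qed
qed

lemma partial_rim: "partial_at (\<lambda>lam. rim x lam r) j q = Dr x q j r"
  unfolding partial_at_def by (rule DERIV_imp_deriv[OF rim_deriv])

lemma velA_dd: "velA x (Suc m) (Suc m) (Suc m) = x m - x (Suc m)"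
  unfolding velA_def partial_rim by (simp add: rim_zero)

lemma accB_ii: assumes "1 \<le> i" "Suc i \<le> d"
  shows "accB x d i (Suc i) (Suc i) = x (i - 1) - x i"
proof -
  obtain m where i: "i = Suc m" using assms by (cases i) auto
  have e: "(\<lambda>t. partial_at (\<lambda>lam. rim x lam (Suc i)) (Suc i) ((\<lambda>_. 0)(i := t)))
     = (\<lambda>t. rim x ((\<lambda>_. 0)(i := t)) i - x (Suc i))"
    unfolding partial_rim by simp
  have "((\<lambda>t. rim x ((\<lambda>_. 0)(i := t)) i - x (Suc i)) has_real_derivative Dr x (\<lambda>_. 0) i i) (at 0)"
    by (auto intro!: derivative_eq_intros rim_deriv)
  then have "deriv (\<lambda>t. rim x ((\<lambda>_. 0)(i := t)) i - x (Suc i)) 0 = Dr x (\<lambda>_. 0) i i"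
    by (rule DERIV_imp_deriv)
  moreover have "accB x d i (Suc i) (Suc i) = deriv (\<lambda>t. partial_at (\<lambda>lam. rim x lam (Suc i)) (Suc i) ((\<lambda>_. 0)(i := t))) 0"
    using assms unfolding accB_def partial2_at_def partial_at_def[of "\<lambda>q. partial_at _ _ q"] by simp
  moreover have "Dr x (\<lambda>_. 0) i i = x (i - 1) - x i" using i by (simp add: rim_zero)
  ultimately show ?thesis unfolding e by simp
qed

lemma frob_ge: assumes "j \<le> d" "r \<le> d" shows "\<bar>M j r\<bar> \<le> frob d M"
proof -
  have "(M j r)\<^sup>2 \<le> (\<Sum>r\<le>d. (M j r)\<^sup>2)"
    by (rule member_le_sum) (use assms in auto)
  also have "\<dots> \<le> (\<Sum>j\<le>d. \<Sum>r\<le>d. (M j r)\<^sup>2)"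
    by (rule member_le_sum[where f = "\<lambda>j. \<Sum>r\<le>d. (M j r)\<^sup>2"]) (use assms in \<open>auto intro: sum_nonneg\<close>)
  finally show ?thesis unfolding frob_def
    by (metis real_sqrt_abs real_sqrt_le_mono)
qed

lemma frob_nonneg: "0 \<le> frob d M"
  unfolding frob_def by (auto intro!: sum_nonneg)

lemma ln_lip: fixes u v :: real shows "\<bar>ln (1 + exp u) - ln (1 + exp v)\<bar> \<le> \<bar>u - v\<bar>"
proof -
  have *: "0 \<le> ln (1 + exp u) - ln (1 + exp v) \<and> ln (1 + exp u) - ln (1 + exp v) \<le> u - v"
    if "v \<le> u" for u v :: real
  proof
    have "1 + exp v \<le> 1 + exp u" using that by simp
    then show "0 \<le> ln (1 + exp u) - ln (1 + exp v)"
      by (simp add: add_pos_nonneg)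
    have "1 + exp v > 0" by (simp add: add_pos_nonneg)
    have "1 + exp u \<le> exp (u - v) * (1 + exp v)"
      using that by (simp add: distrib_left exp_diff field_simps)
    then have "ln (1 + exp u) \<le> ln (exp (u - v) * (1 + exp v))"
      using \<open>1 + exp v > 0\<close> by (subst ln_le_cancel_iff) (auto simp: add_pos_nonneg intro: add_pos_pos)
    also have "\<dots> = (u - v) + ln (1 + exp v)"
      using \<open>1 + exp v > 0\<close> by (simp add: ln_mult)
    finally show "ln (1 + exp u) - ln (1 + exp v) \<le> u - v" by simp
  qed
  show ?thesis
  proof (cases "v \<le> u")
    case True then show ?thesis using *[OF True] by linarith
  next
    case False then show ?thesis using *[of u v] by fastforce
  qed
qed

lemma bce_lip: assumes "y \<in> {0, 1}"
  shows "\<bar>bce y (sigmoid u) - bce y (sigmoid v)\<bar> \<le> \<bar>u - v\<bar>"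
proof -
  have s1: "bce 1 (sigmoid t) = ln (1 + exp (- t))" for t
    unfolding bce_def sigmoid_def by (simp add: ln_div add_pos_nonneg)
  have pp: "1 + exp t \<noteq> 0" for t :: real by (smt (verit) exp_gt_zero)
  have om: "1 - sigmoid t = 1 / (1 + exp t)" for t
    unfolding sigmoid_def by (simp add: field_simps exp_minus add_pos_nonneg add_divide_distrib[symmetric] pp)
  have s0: "bce 0 (sigmoid t) = ln (1 + exp t)" for t
    unfolding bce_def om by (simp add: ln_div add_pos_nonneg)
  show ?thesis using assms
  proof
    assume "y = 0" then show ?thesis using ln_lip[of u v] by (simp add: s0)
  next
    assume "y \<in> {1}" then show ?thesis using ln_lip[of "-u" "-v"] by (simp add: s1)
  qed
qed

lemma rim_diff: assumes "\<forall>j\<in>{1..d}. 0 \<le> lam j \<and> lam j < 1" "k \<le> d"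
  shows "\<bar>rim x lam k - x k\<bar> \<le> (\<Sum>i=1..k. \<bar>x (i - 1) - x i\<bar>)"
  using assms(2)
proof (induction k)
  case 0 then show ?case by simp
next
  case (Suc k)
  have l: "0 \<le> lam (Suc k)" "lam (Suc k) < 1" using assms(1) Suc.prems by auto
  have "rim x lam (Suc k) - x (Suc k) = lam (Suc k) * ((rim x lam k - x k) + (x k - x (Suc k)))"
    by (simp add: algebra_simps)
  then have "\<bar>rim x lam (Suc k) - x (Suc k)\<bar> = lam (Suc k) * \<bar>(rim x lam k - x k) + (x k - x (Suc k))\<bar>"
    using l by (simp add: abs_mult)
  also have "\<dots> \<le> \<bar>(rim x lam k - x k) + (x k - x (Suc k))\<bar>"
    using l by (intro mult_left_le_one_le) auto
  also have "\<dots> \<le> \<bar>rim x lam k - x k\<bar> + \<bar>x k - x (Suc k)\<bar>" by (rule abs_triangle_ineq)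
  also have "\<dots> \<le> (\<Sum>i=1..k. \<bar>x (i - 1) - x i\<bar>) + \<bar>x k - x (Suc k)\<bar>"
    using Suc by simp
  finally show ?case by simp
qed


lemma l1_le: fixes w :: "nat \<Rightarrow> real"
  shows "(\<Sum>k=1..d. \<bar>w k\<bar>) \<le> sqrt (real d) * vnorm d w"
proof -
  have "(\<Sum>k=1..d. \<bar>w k\<bar>)\<^sup>2 \<le> (\<Sum>k=1..d. \<bar>w k\<bar>\<^sup>2) * real d"
    using sum_squared_le_sum_of_squares[of "\<lambda>k. \<bar>w k\<bar>" "{1..d}"] by simp
  also have "\<dots> = (\<Sum>k=1..d. (w k)\<^sup>2) * real d" by simp
  also have "\<dots> \<le> (\<Sum>k\<le>d. (w k)\<^sup>2) * real d"
    by (intro mult_right_mono sum_mono2) auto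
  finally have "(\<Sum>k=1..d. \<bar>w k\<bar>) \<le> sqrt ((\<Sum>k\<le>d. (w k)\<^sup>2) * real d)"
    by (meson real_le_rsqrt)
  then show ?thesis unfolding vnorm_def by (simp add: real_sqrt_mult mult.commute)
qed

theorem theorem3:
  fixes d :: nat and x w lam :: "nat \<Rightarrow> real" and y b :: real
    and g :: "(nat \<Rightarrow> real) \<Rightarrow> real"
  assumes "y \<in> {0, 1}"
    and "\<forall>j\<in>{1..d}. 0 \<le> lam j \<and> lam j < 1"
    and "\<forall>z. g z = (\<Sum>k\<le>d. w k * z k) + b"
  shows "\<bar>bce y (sigmoid (g (\<lambda>k. rim x lam k))) - bce y (sigmoid (g x))\<bar>
     \<le> sqrt (real d) * (frob d (velA x d) + (\<Sum>i=1..d. frob d (accB x d i))) * vnorm d w"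
proof -
  define S where "S = (\<Sum>i=1..d. \<bar>x (i - 1) - x i\<bar>)"
  have S0: "0 \<le> S" unfolding S_def by (auto intro!: sum_nonneg)
  have ek: "\<bar>rim x lam k - x k\<bar> \<le> S" if "k \<le> d" for k
  proof -
    have "(\<Sum>i=1..k. \<bar>x (i - 1) - x i\<bar>) \<le> S"
      unfolding S_def by (rule sum_mono2) (use that in auto)
    then show ?thesis using rim_diff[OF assms(2) that, of x] by linarith
  qed
  have "\<bar>bce y (sigmoid (g (\<lambda>k. rim x lam k))) - bce y (sigmoid (g x))\<bar>
      \<le> \<bar>g (\<lambda>k. rim x lam k) - g x\<bar>" by (rule bce_lip[OF assms(1)])
  also have "g (\<lambda>k. rim x lam k) - g x = (\<Sum>k\<le>d. w k * (rim x lam k - x k))"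
    using assms(3) by (simp add: sum_subtractf[symmetric] algebra_simps)
  also have "(\<Sum>k\<le>d. w k * (rim x lam k - x k)) = (\<Sum>k=1..d. w k * (rim x lam k - x k))"
  proof -
    have "{..d} = insert 0 {1..d}" by auto
    then show ?thesis by simp
  qed
  also have "\<bar>\<dots>\<bar> \<le> (\<Sum>k=1..d. \<bar>w k\<bar> * S)"
    by (rule order_trans[OF sum_abs]) (auto simp: abs_mult intro!: sum_mono mult_left_mono ek)
  also have "\<dots> = S * (\<Sum>k=1..d. \<bar>w k\<bar>)" by (simp add: sum_distrib_left mult.commute)
  also have "\<dots> \<le> S * (sqrt (real d) * vnorm d w)" by (rule mult_left_mono[OF l1_le S0])
  also have "\<dots> \<le> sqrt (real d) * (frob d (velA x d) + (\<Sum>i=1..d. frob d (accB x d i))) * vnorm d w"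
  proof (cases d)
    case 0 then show ?thesis by simp
  next
    case (Suc m)
    have vn: "0 \<le> vnorm d w" unfolding vnorm_def by (auto intro!: sum_nonneg)
    have "S = (\<Sum>i=1..m. \<bar>x (i - 1) - x i\<bar>) + \<bar>x m - x (Suc m)\<bar>"
      unfolding S_def Suc by simp
    also have "\<dots> \<le> (\<Sum>i=1..m. frob d (accB x d i)) + frob d (velA x d)"
    proof (rule add_mono)
      show "(\<Sum>i=1..m. \<bar>x (i - 1) - x i\<bar>) \<le> (\<Sum>i=1..m. frob d (accB x d i))"
      proof (rule sum_mono)
        fix i assume i: "i \<in> {1..m}"
        have "\<bar>accB x d i (Suc i) (Suc i)\<bar> \<le> frob d (accB x d i)"
          by (rule frob_ge) (use i Suc in auto)
        then show "\<bar>x (i - 1) - x i\<bar> \<le> frob d (accB x d i)"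
          using accB_ii[of i d x] i Suc by simp
      qed
      have "\<bar>velA x d d d\<bar> \<le> frob d (velA x d)" by (rule frob_ge) auto
      then show "\<bar>x m - x (Suc m)\<bar> \<le> frob d (velA x d)" using velA_dd[of x m] Suc by simp
    qed
    also have "\<dots> \<le> (\<Sum>i=1..d. frob d (accB x d i)) + frob d (velA x d)"
      unfolding Suc by (simp add: frob_nonneg)
    finally have "S \<le> frob d (velA x d) + (\<Sum>i=1..d. frob d (accB x d i))" by simp
    then have "S * vnorm d w \<le> (frob d (velA x d) + (\<Sum>i=1..d. frob d (accB x d i))) * vnorm d w"
      using vn by (rule mult_right_mono)
    then have "sqrt (real d) * (S * vnorm d w) \<le> sqrt (real d) * ((frob d (velA x d) + (\<Sum>i=1..d. frob d (accB x d i))) * vnorm d w)"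
      by (rule mult_left_mono) simp
    then show ?thesis by (simp add: ac_simps)
  qed
  finally show ?thesis .
qed

end
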